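(* Let $Q\in\mathbb R^{m\times n}$ with $\mathrm{rank}(Q)=n$, $p\in\mathbb R^m$, $r>0$, $\mathcal S=\{x\in\mathbb R^n:\|Qx-p\|_2\le r\}$ with $\mathcal S\cap\mathbb Z^n\neq\emptyset$, and $\alpha\in\mathbb R^n$. Then $$\min_{x\in\mathcal S\cap\mathbb Z^n}\alpha^Tx-\min_{x\in\mathcal S}\alpha^Tx\le 2\,\|Q(Q^TQ)^{-1}\alpha\|_2\,\mu(Q).$$
   Context: For $Q\in\mathbb R^{m\times n}$ of full column rank, $\mu(Q)$ denotes the covering radius of the lattice $Q\mathbb Z^n$: $\mu(Q)=\max_{x\in\mathbb R^n}\min_{z\in\mathbb Z^n}\|Qx-Qz\|_2$. *)

theory Defs
  imports "HOL-Analysis.Analysis"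
begin

definition int_vecs :: "(real ^ 'n) set" where
  "int_vecs = {x. \<forall>i. x $ i \<in> \<int>}"

definition covering_radius :: "real ^ 'n ^ 'm \<Rightarrow> real" where
  "covering_radius Q = (SUP x. INF z\<in>int_vecs. norm (Q *v x - Q *v z))"

end

theory Submission
  imports Defs
begin

lemma tr_inner: "(transpose Q *v w) \<bullet> v = w \<bullet> ((Q::real^'n^'m) *v v)"
  by (metis dot_lmul_matrix transpose_transpose vector_transpose_matrix)

lemma gram_inv:
  fixes Q :: "real ^ 'n ^ 'm"
  assumes "rank Q = CARD('n)"
  shows "(transpose Q ** Q) ** matrix_inv (transpose Q ** Q) = mat 1"
proof -
  have inj: "inj ((*v) Q)" using assms full_rank_injective by blast
  have z: "v = 0" if "(transpose Q ** Q) *v v = 0" for v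
  proof -
    from that have "(transpose Q *v (Q *v v)) \<bullet> v = 0" by (simp add: matrix_vector_mul_assoc)
    hence "(Q *v v) \<bullet> (Q *v v) = 0" by (simp only: tr_inner)
    hence "Q *v v = Q *v 0" by simp
    then show "v = 0" using inj by (meson injD)
  qed
  have "inj ((*v) (transpose Q ** Q))"
  proof (rule injI)
    fix x y assume "(transpose Q ** Q) *v x = (transpose Q ** Q) *v y"
    hence "(transpose Q ** Q) *v (x - y) = 0" by (simp add: matrix_vector_mult_diff_distrib)
    thus "x = y" using z by fastforce
  qed
  hence "\<exists>B. B ** (transpose Q ** Q) = mat 1" using matrix_left_invertible_injective by blast
  hence "invertible (transpose Q ** Q)" using invertible_left_inverse by blast
  hence "\<exists>A'. (transpose Q ** Q) ** A' = mat 1 \<and> A' ** (transpose Q ** Q) = mat 1"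
    unfolding invertible_def .
  thus ?thesis unfolding matrix_inv_def by (rule someI2_ex) auto
qed

lemma cov_bdd:
  fixes Q :: "real ^ 'n ^ 'm"
  shows "bdd_above (range (\<lambda>x. INF z\<in>int_vecs. norm (Q *v x - Q *v z)))"
proof -
  obtain K where K: "\<And>w. norm (Q *v w) \<le> norm w * K" and Kp: "K > 0"
    using bounded_linear.pos_bounded[OF matrix_vector_mul_bounded_linear] by blast
  have "(INF z\<in>int_vecs. norm (Q *v x - Q *v z)) \<le> real CARD('n) * K" for x
  proof -
    define f :: "real^'n" where "f = (\<chi> i. of_int (floor (x $ i)))"
    have fi: "f \<in> int_vecs" unfolding int_vecs_def f_def by auto
    have "(INF z\<in>int_vecs. norm (Q *v x - Q *v z)) \<le> norm (Q *v x - Q *v f)"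
      by (rule cINF_lower[OF _ fi]) (auto intro: bdd_belowI[of _ 0])
    also have "\<dots> = norm (Q *v (x - f))" by (simp add: matrix_vector_mult_diff_distrib)
    also have "\<dots> \<le> norm (x - f) * K" by (rule K)
    also have "norm (x - f) \<le> real CARD('n)"
    proof -
      have "norm (x - f) \<le> (\<Sum>i\<in>UNIV. \<bar>(x - f) $ i\<bar>)" by (rule norm_le_l1_cart)
      also have "\<dots> \<le> (\<Sum>i\<in>(UNIV::'n set). 1)"
      proof (rule sum_mono)
        fix i
        have "(x - f) $ i = x $ i - of_int (floor (x $ i))" by (simp add: f_def)
        moreover have "0 \<le> x $ i - of_int (floor (x $ i))" "x $ i - of_int (floor (x $ i)) < 1"
          by linarith+
        ultimately show "\<bar>(x - f) $ i\<bar> \<le> 1" by simp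
      qed
      finally show ?thesis by simp
    qed
    hence "norm (x - f) * K \<le> real CARD('n) * K"
      using Kp by simp
    finally show ?thesis .
  qed
  thus ?thesis by (intro bdd_aboveI[where M="real CARD('n) * K"]) auto
qed

lemma sq1: "0 \<le> (a::real) \<Longrightarrow> 0 \<le> b \<Longrightarrow> a \<le> b \<longleftrightarrow> a^2 \<le> b^2"
  by simp
lemma sq2: "0 \<le> (n::real) \<Longrightarrow> n \<le> sqrt T \<longleftrightarrow> n^2 \<le> T"
  by (smt (verit) real_le_rsqrt real_less_lsqrt)

lemma half_contra: "(b::real) \<le> b / 2 \<Longrightarrow> 0 < b \<Longrightarrow> False" by simp
lemma half_contra2: "(b::real) \<le> a \<Longrightarrow> a \<le> b / 2 \<Longrightarrow> b \<le> b / 2" by simp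

theorem proposition6p2:
  fixes Q :: "real ^ 'n ^ 'm" and p :: "real ^ 'm" and r :: real and \<alpha> :: "real ^ 'n"
    and S :: "(real ^ 'n) set"
  assumes rank: "rank Q = CARD('n)"
    and r_pos: "r > 0"
    and S_def: "S = {x. norm (Q *v x - p) \<le> r}"
    and nonempty: "S \<inter> int_vecs \<noteq> {}"
  shows "(INF x\<in>S \<inter> int_vecs. \<alpha> \<bullet> x) - (INF x\<in>S. \<alpha> \<bullet> x)
           \<le> 2 * norm (Q *v (matrix_inv (transpose Q ** Q) *v \<alpha>)) * covering_radius Q"
proof -
  define A where "A = transpose Q ** Q"
  define d where "d = matrix_inv A *v \<alpha>"
  define \<beta> where "\<beta> = norm (Q *v d)"
  define \<mu> where "\<mu> = covering_radius Q"
  define c where "c = matrix_inv A *v (transpose Q *v p)"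
  have AA: "A ** matrix_inv A = mat 1" unfolding A_def by (rule gram_inv[OF rank])
  have Ad: "A *v d = \<alpha>" unfolding d_def by (simp add: matrix_vector_mul_assoc AA)
  have Ac: "A *v c = transpose Q *v p" unfolding c_def by (simp add: matrix_vector_mul_assoc AA)
  have key: "\<alpha> \<bullet> v = (Q *v d) \<bullet> (Q *v v)" for v
  proof -
    have "\<alpha> \<bullet> v = (transpose Q *v (Q *v d)) \<bullet> v"
      using Ad unfolding A_def by (simp add: matrix_vector_mul_assoc)
    also have "\<dots> = (Q *v d) \<bullet> (Q *v v)" by (rule tr_inner)
    finally show ?thesis .
  qed
  have keyle: "\<bar>\<alpha> \<bullet> v\<bar> \<le> \<beta> * norm (Q *v v)" for v
    unfolding key \<beta>_def by (rule Cauchy_Schwarz_ineq2)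
  have orth: "(Q *v u) \<bullet> (Q *v c - p) = 0" for u
  proof -
    have "(Q *v u) \<bullet> (Q *v c - p) = (transpose Q *v (Q *v c - p)) \<bullet> u"
      using tr_inner[of Q "Q *v c - p" u] by (simp only: inner_commute)
    also have "transpose Q *v (Q *v c - p) = A *v c - transpose Q *v p"
      unfolding A_def by (simp add: matrix_vector_mult_diff_distrib matrix_vector_mul_assoc)
    finally show ?thesis using Ac by simp
  qed
  define s2 where "s2 = norm (Q *v c - p) ^ 2"
  have decomp: "norm (Q *v x - p) ^ 2 = norm (Q *v (x - c)) ^ 2 + s2" for x
  proof -
    have e: "Q *v x - p = Q *v (x - c) + (Q *v c - p)"
      by (simp add: matrix_vector_mult_diff_distrib)
    have o: "orthogonal (Q *v (x - c)) (Q *v c - p)" using orth[of "x - c"] by (simp add: orthogonal_def)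
    show ?thesis unfolding s2_def e by (rule norm_add_Pythagorean[OF o])
  qed
  define R where "R = sqrt (r^2 - s2)"
  have Smem: "x \<in> S \<longleftrightarrow> norm (Q *v (x - c)) \<le> R" for x
  proof -
    have "x \<in> S \<longleftrightarrow> norm (Q *v x - p) ^ 2 \<le> r ^ 2"
      unfolding S_def using r_pos sq1[of "norm (Q *v x - p)" r] by simp
    also have "\<dots> \<longleftrightarrow> norm (Q *v (x - c)) ^ 2 \<le> r^2 - s2" using decomp[of x] by linarith
    also have "\<dots> \<longleftrightarrow> norm (Q *v (x - c)) \<le> R" unfolding R_def
      using sq2[of "norm (Q *v (x - c))" "r^2 - s2"] by simp
    finally show ?thesis .
  qed
  obtain x0 where x0S: "x0 \<in> S" and x0I: "x0 \<in> int_vecs" using nonempty by blast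
  have R0: "0 \<le> R" using Smem[of x0] x0S norm_ge_zero order.trans by blast
  have b0: "0 \<le> \<beta>" unfolding \<beta>_def by simp
  have lowb: "\<alpha> \<bullet> c - R * \<beta> \<le> \<alpha> \<bullet> x" and upb: "\<alpha> \<bullet> x \<le> \<alpha> \<bullet> c + R * \<beta>" if "x \<in> S" for x
  proof -
    have e: "\<alpha> \<bullet> x = \<alpha> \<bullet> c + \<alpha> \<bullet> (x - c)" by (simp add: inner_diff_right)
    have "\<bar>\<alpha> \<bullet> (x - c)\<bar> \<le> \<beta> * norm (Q *v (x - c))" by (rule keyle)
    also have "\<dots> \<le> \<beta> * R" using Smem[of x] that b0 by (simp add: mult_left_mono)
    finally have "\<bar>\<alpha> \<bullet> (x - c)\<bar> \<le> R * \<beta>" by (simp add: mult.commute)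
    thus "\<alpha> \<bullet> c - R * \<beta> \<le> \<alpha> \<bullet> x" "\<alpha> \<bullet> x \<le> \<alpha> \<bullet> c + R * \<beta>" using e by linarith+
  qed
  have Sne: "S \<noteq> {}" using x0S by blast
  have m_ge: "\<alpha> \<bullet> c - R * \<beta> \<le> (INF x\<in>S. \<alpha> \<bullet> x)"
    by (rule cINF_greatest[OF Sne]) (rule lowb)
  have bddI: "bdd_below ((\<lambda>x. \<alpha> \<bullet> x) ` (S \<inter> int_vecs))"
    by (rule bdd_belowI[where m="\<alpha> \<bullet> c - R * \<beta>"]) (auto intro: lowb)
  have I_le: "(INF x\<in>S \<inter> int_vecs. \<alpha> \<bullet> x) \<le> \<alpha> \<bullet> z" if "z \<in> S" "z \<in> int_vecs" for z
    by (rule cINF_lower[OF bddI]) (use that in blast)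
  define D where "D = (INF x\<in>S \<inter> int_vecs. \<alpha> \<bullet> x) - (INF x\<in>S. \<alpha> \<bullet> x)"
  have D1: "D \<le> 2 * R * \<beta>"
    using I_le[OF x0S x0I] upb[OF x0S] m_ge unfolding D_def by linarith
  have cov: "\<exists>z\<in>int_vecs. norm (Q *v y - Q *v z) < \<mu> + \<epsilon>" if "\<epsilon> > 0" for y \<epsilon>
  proof -
    have "(INF z\<in>int_vecs. norm (Q *v y - Q *v z)) \<le> \<mu>"
      unfolding \<mu>_def covering_radius_def by (rule cSUP_upper[OF UNIV_I cov_bdd])
    hence "(INF z\<in>int_vecs. norm (Q *v y - Q *v z)) < \<mu> + \<epsilon>" using that by linarith
    moreover have "(\<lambda>z. norm (Q *v y - Q *v z)) ` int_vecs \<noteq> {}" using x0I by blast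
    ultimately obtain w where w: "w \<in> (\<lambda>z. norm (Q *v y - Q *v z)) ` int_vecs" "w < \<mu> + \<epsilon>"
      using cInf_lessD[of "(\<lambda>z. norm (Q *v y - Q *v z)) ` int_vecs" "\<mu> + \<epsilon>"] by metis
    then obtain z where "z \<in> int_vecs" "norm (Q *v y - Q *v z) < \<mu> + \<epsilon>" by blast
    thus ?thesis by blast
  qed
  have D2: "D \<le> 2 * \<beta> * (\<mu> + \<epsilon>)" if bp: "\<beta> > 0" and ep: "\<epsilon> > 0" and le: "\<mu> + \<epsilon> \<le> R" for \<epsilon>
  proof -
    define t where "t = (R - (\<mu> + \<epsilon>)) / \<beta>"
    define y where "y = c - t *\<^sub>R d"
    have t0: "0 \<le> t" unfolding t_def using bp le by simp
    have nyc: "norm (Q *v (y - c)) = R - (\<mu> + \<epsilon>)"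
    proof -
      have yc: "y - c = (- t) *\<^sub>R d" unfolding y_def by simp
      have "Q *v (y - c) = (- t) *\<^sub>R (Q *v d)" unfolding yc by (rule matrix_vector_mult_scaleR)
      hence "norm (Q *v (y - c)) = t * \<beta>" unfolding \<beta>_def using t0 by simp
      thus ?thesis unfolding t_def using bp by simp
    qed
    obtain z where zI: "z \<in> int_vecs" and zn: "norm (Q *v y - Q *v z) < \<mu> + \<epsilon>"
      using cov[OF ep] by blast
    have nzy: "norm (Q *v (z - y)) < \<mu> + \<epsilon>"
      using zn by (simp add: matrix_vector_mult_diff_distrib norm_minus_commute)
    have "Q *v (z - c) = Q *v (z - y) + Q *v (y - c)"
      by (simp add: matrix_vector_mult_diff_distrib)
    hence "norm (Q *v (z - c)) \<le> norm (Q *v (z - y)) + norm (Q *v (y - c))"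
      by (metis norm_triangle_ineq)
    hence "norm (Q *v (z - c)) \<le> R" using nzy nyc by linarith
    hence zS: "z \<in> S" using Smem by blast
    have ad: "\<alpha> \<bullet> d = \<beta> ^ 2" unfolding key \<beta>_def by (simp add: power2_norm_eq_inner)
    have ay: "\<alpha> \<bullet> y = \<alpha> \<bullet> c - t * \<beta> ^ 2" unfolding y_def
      by (simp add: inner_diff_right ad)
    have tb: "t * \<beta> ^ 2 = (R - (\<mu> + \<epsilon>)) * \<beta>" unfolding t_def using bp
      by (simp add: power2_eq_square)
    have "\<alpha> \<bullet> (z - y) \<le> \<beta> * norm (Q *v (z - y))" using keyle[of "z - y"] by linarith
    also have "\<dots> \<le> \<beta> * (\<mu> + \<epsilon>)" using nzy b0 by (simp add: mult_left_mono)
    finally have "\<alpha> \<bullet> z \<le> \<alpha> \<bullet> y + \<beta> * (\<mu> + \<epsilon>)" by (simp add: inner_diff_right)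
    hence "\<alpha> \<bullet> z \<le> \<alpha> \<bullet> c - R * \<beta> + 2 * \<beta> * (\<mu> + \<epsilon>)" using ay tb
      by (simp add: algebra_simps)
    thus ?thesis using I_le[OF zS zI] m_ge unfolding D_def by linarith
  qed
  have "D \<le> 2 * \<beta> * \<mu>"
  proof (cases "\<beta> = 0 \<or> R \<le> \<mu>")
    case True
    hence "R * \<beta> \<le> \<mu> * \<beta>" using b0 by (auto intro: mult_right_mono)
    thus ?thesis using D1 by (simp add: algebra_simps)
  next
    case False
    hence bp: "\<beta> > 0" and Rm: "\<mu> < R" using b0 by auto
    show ?thesis
    proof (rule ccontr)
      assume "\<not> D \<le> 2 * \<beta> * \<mu>"
      hence g: "D - 2 * \<beta> * \<mu> > 0" by simp
      define \<epsilon> where "\<epsilon> = min (R - \<mu>) ((D - 2 * \<beta> * \<mu>) / (4 * \<beta>))"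
      have ep: "\<epsilon> > 0" unfolding \<epsilon>_def using g bp Rm by simp
      have le: "\<mu> + \<epsilon> \<le> R" unfolding \<epsilon>_def by linarith
      have "2 * \<beta> * \<epsilon> \<le> 2 * \<beta> * ((D - 2 * \<beta> * \<mu>) / (4 * \<beta>))"
      proof (rule mult_left_mono)
        show "\<epsilon> \<le> (D - 2 * \<beta> * \<mu>) / (4 * \<beta>)" unfolding \<epsilon>_def by simp
      qed (use bp in simp)
      also have "\<dots> = (D - 2 * \<beta> * \<mu>) / 2" using bp by (simp add: field_simps)
      finally have "2 * \<beta> * \<epsilon> \<le> (D - 2 * \<beta> * \<mu>) / 2" .
      moreover have "D \<le> 2 * \<beta> * \<mu> + 2 * \<beta> * \<epsilon>" using D2[OF bp ep le] by (simp add: algebra_simps)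
      ultimately have "D - 2 * \<beta> * \<mu> \<le> (D - 2 * \<beta> * \<mu>) / 2" by linarith
      thus False using g half_contra by blast
    qed
  qed
  thus ?thesis unfolding D_def \<beta>_def \<mu>_def d_def A_def by simp
qed
end
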